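(* Let $n\ge 1$ and let $b_1,\ldots,b_{2^n}\in\{0,1\}$ be such that the cyclic sequence $[b_1,\ldots,b_{2^n}]$ is a binary De Bruijn cycle of order $n$ (its $2^n$ cyclic windows of length $n$ are all distinct). For a seed $(z_1,z_2)\in\{0,1\}^2$ define $z_i=b_{i-2}+z_{i-1}+z_{i-2}\pmod 2$ for $i=3,\ldots,2^n+2$, and let $\mathcal{D}(z_1z_2)=z_{2^n+1}z_{2^n+2}$. Then $\mathcal{D}$ is a permutation of $\{00,01,10,11\}$ with exactly one fixed point $z_1z_2$, given by $$z_1=a_0+\delta_{\tilde n,0}\,a_1+\delta_{\tilde n,1}\,a_2,\qquad z_2=a_1+\delta_{\tilde n,0}\,a_2+\delta_{\tilde n,1}\,a_0\pmod 2,$$ where $\tilde n=n\bmod 2$, $\delta$ is the Kronecker delta, and $a_j=\sum_i b_{3i+j}\bmod 2$ for $j=0,1,2$, the sum running over all integers $i$ with $1\le 3i+j\le 2^n$. Consequently, the preimage of this De Bruijn cycle under the homomorphism $B_{n+2}\to B_n$ induced by $d(x_1,x_2,x_3)=x_1+x_2+x_3$ consists of exactly two vertex-disjoint cycles in $B_{n+2}$: one of length $2^n$ (started at the fixed seed) and one of length $3\cdot 2^n$ (formed by the other three seeds).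
   Context: $B_m$ denotes the binary De Bruijn digraph with vertex set $\{0,1\}^m$ and an edge from $(x_1,\ldots,x_m)$ to $(y_1,\ldots,y_m)$ iff $y_i=x_{i+1}$ for $i<m$. The homomorphism induced by $d$ sends $(x_1,\ldots,x_{n+2})$ to $(d(x_1,x_2,x_3),\ldots,d(x_n,x_{n+1},x_{n+2}))$. The sequence $z_1,\ldots,z_{2^n+2}$ is the preimage path of the cycle started from the seed $z_1z_2$, i.e. $d(z_j,z_{j+1},z_{j+2})=b_j$ for $j=1,\ldots,2^n$. *)

theory Defs
  imports Main
begin

definition dB_vert :: "nat \<Rightarrow> nat list set" where
  "dB_vert m = {x. length x = m \<and> set x \<subseteq> {0, 1}}"

text \<open>Edge x -> y of B_m: y_i = x_(i+1) for i < m.\<close>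
definition dB_edge :: "nat list \<Rightarrow> nat list \<Rightarrow> bool" where
  "dB_edge x y \<longleftrightarrow> length x = length y \<and> tl x = butlast y"

definition hom_d :: "nat list \<Rightarrow> nat list" where
  "hom_d x = map (\<lambda>i. (x ! i + x ! (i + 1) + x ! (i + 2)) mod 2) [0..<length x - 2]"

text \<open>The k-th cyclic window of length n of the cyclic sequence b_1..b_(2^n)
  (0-based start k, so window 0 is b_1..b_n).\<close>
definition window :: "nat \<Rightarrow> (nat \<Rightarrow> nat) \<Rightarrow> nat \<Rightarrow> nat list" where
  "window n b k = map (\<lambda>t. b (((k + t) mod 2 ^ n) + 1)) [0..<n]"

definition is_dB_cycle :: "nat \<Rightarrow> (nat \<Rightarrow> nat) \<Rightarrow> bool" where
  "is_dB_cycle n b \<longleftrightarrow> (\<forall>i\<in>{1..2 ^ n}. b i \<in> {0, 1}) \<and> inj_on (window n b) {0..<2 ^ n}"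

definition cyc_edges :: "nat \<Rightarrow> (nat \<Rightarrow> nat) \<Rightarrow> (nat list \<times> nat list) set" where
  "cyc_edges n b = {(window n b k, window n b (Suc k)) | k. k < 2 ^ n}"

text \<open>zpair b s k = (z_(k+1), z_(k+2)) where (z_1,z_2) = s and
  z_i = b_(i-2) + z_(i-1) + z_(i-2) mod 2.\<close>
fun zpair :: "(nat \<Rightarrow> nat) \<Rightarrow> nat \<times> nat \<Rightarrow> nat \<Rightarrow> nat \<times> nat" where
  "zpair b s 0 = s"
| "zpair b s (Suc k) = (case zpair b s k of (x, y) \<Rightarrow> (y, (b (k + 1) + y + x) mod 2))"

text \<open>z_i for i >= 1.\<close>
definition zval :: "(nat \<Rightarrow> nat) \<Rightarrow> nat \<times> nat \<Rightarrow> nat \<Rightarrow> nat" where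
  "zval b s i = fst (zpair b s (i - 1))"

definition Dmap :: "nat \<Rightarrow> (nat \<Rightarrow> nat) \<Rightarrow> nat \<times> nat \<Rightarrow> nat \<times> nat" where
  "Dmap n b s = zpair b s (2 ^ n)"

definition seeds :: "(nat \<times> nat) set" where
  "seeds = {0, 1} \<times> {0, 1}"

definition kdelta :: "nat \<Rightarrow> nat \<Rightarrow> nat" where
  "kdelta i j = (if i = j then 1 else 0)"

definition acoef :: "nat \<Rightarrow> (nat \<Rightarrow> nat) \<Rightarrow> nat \<Rightarrow> nat" where
  "acoef n b j = (\<Sum>i\<in>{i::int. 1 \<le> 3 * i + int j \<and> 3 * i + int j \<le> 2 ^ n}. b (nat (3 * i + int j))) mod 2"

definition fixed_seed :: "nat \<Rightarrow> (nat \<Rightarrow> nat) \<Rightarrow> nat \<times> nat" where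
  "fixed_seed n b =
     ((acoef n b 0 + kdelta (n mod 2) 0 * acoef n b 1 + kdelta (n mod 2) 1 * acoef n b 2) mod 2,
      (acoef n b 1 + kdelta (n mod 2) 0 * acoef n b 2 + kdelta (n mod 2) 1 * acoef n b 0) mod 2)"

definition start_vertex :: "nat \<Rightarrow> (nat \<Rightarrow> nat) \<Rightarrow> nat \<times> nat \<Rightarrow> nat list" where
  "start_vertex n b s = map (zval b s) [1..<n + 3]"

definition pre_verts :: "nat \<Rightarrow> (nat \<Rightarrow> nat) \<Rightarrow> nat list set" where
  "pre_verts n b = {x \<in> dB_vert (n + 2). hom_d x \<in> window n b ` {0..<2 ^ n}}"

definition pre_edges :: "nat \<Rightarrow> (nat \<Rightarrow> nat) \<Rightarrow> (nat list \<times> nat list) set" where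
  "pre_edges n b = {(x, y). x \<in> pre_verts n b \<and> y \<in> pre_verts n b \<and> dB_edge x y
                      \<and> (hom_d x, hom_d y) \<in> cyc_edges n b}"

definition list_cyc_edges :: "'a list \<Rightarrow> ('a \<times> 'a) set" where
  "list_cyc_edges C = {(C ! i, C ! ((i + 1) mod length C)) | i. i < length C}"

end

theory Submission
  imports Defs
begin

lemma cancel2: assumes "(c + (x::nat)) mod 2 = (c + x') mod 2" "x \<in> {0,1}" "x' \<in> {0,1}" shows "x = x'"
proof -
  have "even (c+x) = even (c+x')" using assms(1) by (simp add: even_iff_mod_2_eq_zero)
  then show ?thesis using assms(2,3) by auto
qed

lemma zs: "((x::nat) + y + (c + y + x) mod 2) mod 2 = c mod 2"
proof -
  have "(x + y + (c + y + x) mod 2) mod 2 = (x + y + (c + y + x)) mod 2" by (rule mod_add_right_eq)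
  also have "x + y + (c + y + x) = c + (x + y) * 2" by simp
  also have "(c + (x + y) * 2) mod 2 = c mod 2" by (rule mod_mult_self1)
  finally show ?thesis .
qed

lemma ar_gen: "((bv::nat) + A mod 2 + B mod 2) mod 2 = (bv + A + B) mod 2"
proof -
  have "((bv + A mod 2) + B mod 2) mod 2 = (bv + A mod 2 + B) mod 2" by (rule mod_add_right_eq)
  also have "bv + A mod 2 + B = A mod 2 + (bv + B)" by simp
  also have "(A mod 2 + (bv + B)) mod 2 = (A + (bv + B)) mod 2" by (rule mod_add_left_eq)
  also have "A + (bv + B) = bv + A + B" by simp
  finally show ?thesis .
qed

lemma ar_2k: "((a::nat) + 2 * k) mod 2 = a mod 2" by simp
lemma ar1: "((bv::nat) + (y+S2+S0) mod 2 + (x+S1+S2) mod 2) mod 2 = (x + y + S0 + (S1 + bv)) mod 2"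
proof -
  have "bv + (y+S2+S0) + (x+S1+S2) = (x + y + S0 + (S1 + bv)) + 2 * S2" by simp
  then show ?thesis by (simp only: ar_gen ar_2k)
qed
lemma ar2: "((bv::nat) + (x+y+S0+S1) mod 2 + (y+S2+S0) mod 2) mod 2 = (x + S1 + (S2 + bv)) mod 2"
proof -
  have "bv + (x+y+S0+S1) + (y+S2+S0) = (x + S1 + (S2 + bv)) + 2 * (y+S0)" by simp
  then show ?thesis by (simp only: ar_gen ar_2k)
qed
lemma ar3: "((bv::nat) + (x+S1+S2) mod 2 + (x+y+S0+S1) mod 2) mod 2 = (y + S2 + (S0 + bv)) mod 2"
proof -
  have "bv + (x+S1+S2) + (x+y+S0+S1) = (y + S2 + (S0 + bv)) + 2 * (x+S1)" by simp
  then show ?thesis by (simp only: ar_gen ar_2k)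
qed


lemma zpair_cong: "(\<And>i. 1 \<le> i \<Longrightarrow> i \<le> k \<Longrightarrow> b i = b' i) \<Longrightarrow> zpair b s k = zpair b' s k"
  by (induction k) (auto split: prod.splits)

lemma zpair_add: "zpair b s (m + k) = zpair (\<lambda>i. b (i + m)) (zpair b s m) k"
  by (induction k) (auto simp: add_ac split: prod.splits)

lemma zpair_seeds: "s \<in> seeds \<Longrightarrow> zpair b s k \<in> seeds"
  by (induction k) (auto simp: seeds_def split: prod.splits)

lemma zpair_inj: "s \<in> seeds \<Longrightarrow> s' \<in> seeds \<Longrightarrow> zpair b s k = zpair b s' k \<Longrightarrow> s = s'"
proof (induction k)
  case 0 then show ?case by simp
next
  case (Suc k)
  obtain x y where xy: "zpair b s k = (x,y)" by (cases "zpair b s k")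
  obtain x' y' where xy': "zpair b s' k = (x',y')" by (cases "zpair b s' k")
  have "(x,y) \<in> seeds" "(x',y') \<in> seeds" using zpair_seeds Suc.prems xy xy' by metis+
  moreover have "y = y'" "(b (k+1) + y + x) mod 2 = (b (k+1) + y' + x') mod 2"
    using Suc.prems(3) xy xy' by auto
  ultimately have "x = x'" using cancel2[of "b (k+1) + y" x x'] by (auto simp: seeds_def add.assoc)
  then show ?case using Suc xy xy' \<open>y = y'\<close> by auto
qed

lemma zpair_bij: "bij_betw (\<lambda>s. zpair b s k) seeds seeds"
proof -
  have i: "inj_on (\<lambda>s. zpair b s k) seeds" by (auto intro: inj_onI zpair_inj)
  have "(\<lambda>s. zpair b s k) ` seeds \<subseteq> seeds" using zpair_seeds by blast
  moreover have "finite seeds" by (simp add: seeds_def)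
  ultimately have "(\<lambda>s. zpair b s k) ` seeds = seeds" using i endo_inj_surj by blast
  then show ?thesis using i by (simp add: bij_betw_def)
qed

fun Ssum :: "(nat \<Rightarrow> nat) \<Rightarrow> nat \<Rightarrow> nat \<Rightarrow> nat" where
  "Ssum b j 0 = 0"
| "Ssum b j (Suc k) = Ssum b j k + (if Suc k mod 3 = j then b (Suc k) else 0)"






lemma zpair_closed:
  assumes "x \<in> {0,1}" "y \<in> {0,1}"
  shows "zpair b (x,y) k =
   (if k mod 3 = 0 then ((x + Ssum b 1 k + Ssum b 2 k) mod 2, (y + Ssum b 2 k + Ssum b 0 k) mod 2)
    else if k mod 3 = 1 then ((y + Ssum b 2 k + Ssum b 0 k) mod 2, (x + y + Ssum b 0 k + Ssum b 1 k) mod 2)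
    else ((x + y + Ssum b 0 k + Ssum b 1 k) mod 2, (x + Ssum b 1 k + Ssum b 2 k) mod 2))"
proof (induction k)
  case 0 then show ?case using assms by auto
next
  case (Suc k)
  have c: "k mod 3 = 0 \<or> k mod 3 = 1 \<or> k mod 3 = 2"
  proof - have "k mod 3 < 3" by simp then show ?thesis by linarith qed
  moreover
  { assume h: "k mod 3 = 0"
    have "Suc k mod 3 = 1" using h by (simp add: mod_Suc)
    then have ?case using Suc h by (simp add: ar1) }
  moreover
  { assume h: "k mod 3 = 1"
    have "Suc k mod 3 = 2" using h by (simp add: mod_Suc)
    then have ?case using Suc h  by (simp add: ar2 ar3) }
  moreover
  { assume h: "k mod 3 = 2"
    have "Suc k mod 3 = 0" using h by (simp add: mod_Suc)
    then have ?case using Suc h  by (simp add: ar2 ar3) }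
  ultimately show ?case by argo
qed

lemma Aset_fin: "j < 3 \<Longrightarrow> finite {i::int. 1 \<le> 3 * i + int j \<and> 3 * i + int j \<le> int m}"
  by (rule finite_subset[of _ "{-1..int m}"]) auto

lemma asum_Ssum: "j < 3 \<Longrightarrow>
  (\<Sum>i\<in>{i::int. 1 \<le> 3 * i + int j \<and> 3 * i + int j \<le> int m}. b (nat (3 * i + int j))) = Ssum b j m"
proof (induction m)
  case 0
  have e: "{i::int. 1 \<le> 3 * i + int j \<and> 3 * i + int j \<le> 0} = {}" by auto
  show ?case by (simp add: e)
next
  case (Suc m)
  let ?A = "\<lambda>m. {i::int. 1 \<le> 3 * i + int j \<and> 3 * i + int j \<le> int m}"
  show ?case
  proof (cases "Suc m mod 3 = j")
    case True
    define i0 where "i0 = int (Suc m div 3)"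
    have "3 * (Suc m div 3) + j = Suc m" using True div_mult_mod_eq[of "Suc m" 3] by simp
    then have e: "3 * i0 + int j = int (Suc m)" unfolding i0_def by (metis of_nat_add of_nat_mult of_nat_numeral)
    have "?A (Suc m) = insert i0 (?A m)" using e by auto
    moreover have "i0 \<notin> ?A m" using e by auto
    ultimately have "(\<Sum>i\<in>?A (Suc m). b (nat (3 * i + int j))) = b (nat (3 * i0 + int j)) + (\<Sum>i\<in>?A m. b (nat (3 * i + int j)))"
      using Aset_fin[OF Suc.prems] by simp
    moreover have "nat (3 * i0 + int j) = Suc m" using e by simp
    ultimately show ?thesis using Suc True by simp
  next
    case False
    have "?A (Suc m) = ?A m"
    proof (intro set_eqI iffI)
      fix i assume "i \<in> ?A (Suc m)"
      then have "1 \<le> 3 * i + int j" "3 * i + int j \<le> int (Suc m)" by auto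
      moreover have "3 * i + int j \<noteq> int (Suc m)"
      proof
        assume e: "3 * i + int j = int (Suc m)"
        have "int (Suc m) mod 3 = (int j + 3 * i) mod 3" using e by (simp add: add.commute)
        also have "\<dots> = int j" using Suc.prems by simp
        finally have "int (Suc m mod 3) = int j" by (simp add: zmod_int)
        then show False using False by simp
      qed
      ultimately show "i \<in> ?A m" by auto
    qed auto
    then show ?thesis using Suc False by simp
  qed
qed

lemma acoef_Ssum: "j < 3 \<Longrightarrow> acoef n b j = Ssum b j (2^n) mod 2"
  unfolding acoef_def using asum_Ssum[of j b "2^n"] by simp

lemma pow2_mod3: "(2::nat)^n mod 3 = (if even n then 1 else 2)"
proof (induction n)
  case 0 then show ?case by simp
next
  case (Suc n)
  have "(2::nat)^Suc n mod 3 = (2 * (2^n mod 3)) mod 3" by (simp add: mod_mult_right_eq)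
  then show ?case using Suc by auto
qed

definition Dl :: "bool \<Rightarrow> nat \<Rightarrow> nat \<Rightarrow> nat \<Rightarrow> nat \<times> nat \<Rightarrow> nat \<times> nat" where
  "Dl e p0 p1 p2 s = (case s of (x,y) \<Rightarrow> if e then ((y+p2+p0) mod 2, (x+y+p0+p1) mod 2)
      else ((x+y+p0+p1) mod 2, (x+p1+p2) mod 2))"

lemma Dmap_Dl: "s \<in> seeds \<Longrightarrow> Dmap n b s = Dl (even n) (acoef n b 0) (acoef n b 1) (acoef n b 2) s"
proof -
  assume s: "s \<in> seeds"
  then obtain x y where xy: "s = (x,y)" "x \<in> {0,1}" "y \<in> {0,1}" by (auto simp: seeds_def)
  show ?thesis
    unfolding Dmap_def xy(1) zpair_closed[OF xy(2,3)] Dl_def pow2_mod3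
    by (simp add: acoef_Ssum ar_gen)
qed

lemma Dl_fix: "x \<in> {0,1} \<Longrightarrow> y \<in> {0,1} \<Longrightarrow> p0 \<in> {0,1} \<Longrightarrow> p1 \<in> {0,1} \<Longrightarrow> p2 \<in> {0,1} \<Longrightarrow>
  (Dl e p0 p1 p2 (x,y) = (x,y)) \<longleftrightarrow>
  (x,y) = (if e then ((p0+p1) mod 2, (p1+p2) mod 2) else ((p0+p2) mod 2, (p1+p0) mod 2))"
  unfolding Dl_def by (cases e) auto

lemma Dl_3: "x \<in> {0,1} \<Longrightarrow> y \<in> {0,1} \<Longrightarrow> p0 \<in> {0,1} \<Longrightarrow> p1 \<in> {0,1} \<Longrightarrow> p2 \<in> {0,1} \<Longrightarrow>
  Dl e p0 p1 p2 (Dl e p0 p1 p2 (Dl e p0 p1 p2 (x,y))) = (x,y)"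
  unfolding Dl_def by (cases e) auto

lemma acoef01: "acoef n b j \<in> {0,1}" unfolding acoef_def by auto

lemma fixed_seed_in: "fixed_seed n b \<in> seeds"
  unfolding fixed_seed_def seeds_def by auto

lemma Dmap_seeds: "s \<in> seeds \<Longrightarrow> Dmap n b s \<in> seeds"
  unfolding Dmap_def by (rule zpair_seeds)

lemma Dmap_fix_iff: "s \<in> seeds \<Longrightarrow> Dmap n b s = s \<longleftrightarrow> s = fixed_seed n b"
proof -
  assume s: "s \<in> seeds"
  then obtain x y where xy: "s = (x,y)" "x \<in> {0,1}" "y \<in> {0,1}" by (auto simp: seeds_def)
  have "fixed_seed n b = (if even n then ((acoef n b 0+acoef n b 1) mod 2, (acoef n b 1+acoef n b 2) mod 2)
     else ((acoef n b 0+acoef n b 2) mod 2, (acoef n b 1+acoef n b 0) mod 2))"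
    unfolding fixed_seed_def kdelta_def by auto
  then show ?thesis using Dmap_Dl[OF s] Dl_fix[OF xy(2,3) acoef01 acoef01 acoef01] xy(1) by simp
qed

lemma Dmap_3: "s \<in> seeds \<Longrightarrow> Dmap n b (Dmap n b (Dmap n b s)) = s"
proof -
  assume s: "s \<in> seeds"
  then obtain x y where xy: "s = (x,y)" "x \<in> {0,1}" "y \<in> {0,1}" by (auto simp: seeds_def)
  show ?thesis using Dmap_Dl Dmap_seeds s Dl_3[OF xy(2,3) acoef01 acoef01 acoef01] xy(1) by metis
qed


locale dbc =
  fixes n :: nat and b :: "nat \<Rightarrow> nat"
  assumes n1: "n \<ge> 1" and db: "is_dB_cycle n b"
begin

abbreviation "N \<equiv> (2::nat)^n"

definition bp :: "nat \<Rightarrow> nat" where "bp i = b ((i - 1) mod N + 1)"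

definition V :: "nat \<times> nat \<Rightarrow> nat \<Rightarrow> nat list" where
  "V s j = map (\<lambda>t. fst (zpair bp s (j + t))) [0..<n+2]"

abbreviation "D \<equiv> Dmap n b"

lemma Npos: "N > 0" by simp

lemma bp01: "bp i \<in> {0,1}"
proof -
  have "(i - 1) mod N + 1 \<in> {1..N}" using Npos by (simp add: Suc_leI)
  then show ?thesis using db unfolding is_dB_cycle_def bp_def by blast
qed

lemma bp_eq: "1 \<le> i \<Longrightarrow> i \<le> N \<Longrightarrow> bp i = b i"
proof -
  assume "1 \<le> i" "i \<le> N"
  then have "(i - 1) mod N = i - 1" by simp
  then show ?thesis using \<open>1 \<le> i\<close> unfolding bp_def by simp
qed

lemma bp_per: "1 \<le> i \<Longrightarrow> bp (i + N) = bp i"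
proof -
  assume "1 \<le> i"
  then have "i + N - 1 = (i - 1) + N" by simp
  then show ?thesis unfolding bp_def by simp
qed

lemma Dmap_bp: "D s = zpair bp s N"
  unfolding Dmap_def by (rule zpair_cong) (simp add: bp_eq)

lemma zpair_bp_shift: "zpair bp s (N + k) = zpair bp (D s) k"
proof -
  have "zpair bp s (N + k) = zpair (\<lambda>i. bp (i + N)) (zpair bp s N) k" by (rule zpair_add)
  also have "\<dots> = zpair bp (zpair bp s N) k" by (rule zpair_cong) (simp add: bp_per)
  finally show ?thesis by (simp add: Dmap_bp)
qed

lemma V_shift: "V s (N + j) = V (D s) j"
  unfolding V_def by (simp add: add.assoc zpair_bp_shift)

lemma V_iter: "V s (q * N + j) = V ((D ^^ q) s) j"
proof (induction q arbitrary: s)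
  case 0 then show ?case by simp
next
  case (Suc q)
  have "V s (Suc q * N + j) = V s (N + (q * N + j))" by (simp add: add.assoc)
  also have "\<dots> = V (D s) (q * N + j)" by (rule V_shift)
  also have "\<dots> = V ((D ^^ q) (D s)) j" by (rule Suc)
  finally show ?case by (simp add: funpow_Suc_right del: funpow.simps)
qed

lemma V_decomp: "V s j = V ((D ^^ (j div N)) s) (j mod N)"
  using V_iter[of s "j div N" "j mod N"] by (metis div_mult_mod_eq)

lemma V_nth: "i < n + 2 \<Longrightarrow> V s j ! i = fst (zpair bp s (j + i))"
  unfolding V_def by (simp del: zpair.simps upt_Suc add: nth_map_upt)

lemma V_len: "length (V s j) = n + 2" unfolding V_def by simp

lemma start_V: "start_vertex n b s = V s 0"
proof (rule nth_equalityI)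
  have nN: "n + 1 \<le> N" using less_exp[of n] by (simp add: Suc_leI)
  show "length (start_vertex n b s) = length (V s 0)" by (simp add: start_vertex_def V_len)
  fix i assume "i < length (start_vertex n b s)"
  then have i: "i < n + 2" by (simp add: start_vertex_def)
  have "zpair b s i = zpair bp s i" by (rule zpair_cong) (use i nN in \<open>simp add: bp_eq\<close>)
  moreover have "start_vertex n b s ! i = zval b s (1 + i)"
    unfolding start_vertex_def using i by (simp del: upt_Suc add: nth_map_upt)
  ultimately show "start_vertex n b s ! i = V s 0 ! i" using i by (simp del: zpair.simps add: V_nth zval_def)
qed

lemma zsum3: "(fst (zpair c s m) + fst (zpair c s (Suc m)) + fst (zpair c s (Suc (Suc m)))) mod 2 = c (Suc m) mod 2"
proof -
  obtain x y where xy: "zpair c s m = (x,y)" by (cases "zpair c s m")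
  show ?thesis using xy zs by simp
qed

lemma hom_d_nth: "i < length x - 2 \<Longrightarrow> hom_d x ! i = (x!i + x!(i+1) + x!(i+2)) mod 2"
  unfolding hom_d_def by simp

lemma window_mod: "window n b (j mod N) = window n b j"
  unfolding window_def by (simp add: mod_add_left_eq)

lemma hom_V: "hom_d (V s j) = window n b j"
proof (rule nth_equalityI)
  show "length (hom_d (V s j)) = length (window n b j)"
    by (simp add: hom_d_def V_def window_def)
next
  fix i assume "i < length (hom_d (V s j))"
  then have i: "i < n" by (simp add: hom_d_def V_def)
  have "hom_d (V s j) ! i = (V s j ! i + V s j ! (i+1) + V s j ! (i+2)) mod 2"
    using i by (simp add: hom_d_nth V_len)
  also have "\<dots> = (fst (zpair bp s (j+i)) + fst (zpair bp s (Suc (j+i))) + fst (zpair bp s (Suc (Suc (j+i))))) mod 2"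
    using i by (simp del: zpair.simps add: V_nth)
  also have "\<dots> = bp (Suc (j+i)) mod 2" by (rule zsum3)
  also have "\<dots> = bp (Suc (j+i))" using bp01[of "Suc (j+i)"] by auto
  also have "\<dots> = window n b j ! i" using i by (simp add: window_def bp_def)
  finally show "hom_d (V s j) ! i = window n b j ! i" .
qed

lemma V_vert: "s \<in> seeds \<Longrightarrow> V s j \<in> dB_vert (n+2)"
proof -
  assume s: "s \<in> seeds"
  have h: "fst (zpair bp s k) \<in> {0,1}" for k
    using zpair_seeds[OF s, of bp k] by (cases "zpair bp s k") (auto simp: seeds_def)
  have "set (V s j) \<subseteq> {0,1}"
  proof
    fix x assume "x \<in> set (V s j)"
    then obtain i where "i < n + 2" "x = V s j ! i" by (auto simp: in_set_conv_nth V_len)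
    then show "x \<in> {0,1}" using h V_nth by metis
  qed
  then show ?thesis unfolding dB_vert_def by (simp add: V_len)
qed

lemma V_edge: "dB_edge (V s j) (V s (Suc j))"
  unfolding dB_edge_def
proof (intro conjI)
  show "length (V s j) = length (V s (Suc j))" by (simp add: V_len)
  show "tl (V s j) = butlast (V s (Suc j))"
    by (rule nth_equalityI) (auto simp: V_len V_nth nth_tl nth_butlast simp del: zpair.simps)
qed

lemma V_pre: "s \<in> seeds \<Longrightarrow> V s j \<in> pre_verts n b"
  unfolding pre_verts_def using V_vert hom_V window_mod[of j]
  by (metis (mono_tags, lifting) Npos atLeastLessThan_iff imageI mem_Collect_eq mod_less_divisor zero_le)

lemma V01: "V s j ! 0 = fst (zpair bp s j)" "V s j ! 1 = snd (zpair bp s j)"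
proof -
  show "V s j ! 0 = fst (zpair bp s j)" using V_nth[of 0 s j] by simp
  obtain x y where xy: "zpair bp s j = (x,y)" by (cases "zpair bp s j")
  have "V s j ! 1 = fst (zpair bp s (Suc j))" using V_nth[of 1 s j] by simp
  then show "V s j ! 1 = snd (zpair bp s j)" using xy by simp
qed

lemma V_inj_seed: "s \<in> seeds \<Longrightarrow> s' \<in> seeds \<Longrightarrow> V s j = V s' j \<Longrightarrow> s = s'"
proof -
  assume a: "s \<in> seeds" "s' \<in> seeds" "V s j = V s' j"
  then have "fst (zpair bp s j) = fst (zpair bp s' j)" "snd (zpair bp s j) = snd (zpair bp s' j)"
    using V01[of s j] V01[of s' j] by simp_all
  then have "zpair bp s j = zpair bp s' j" by (rule prod_eqI)
  then show ?thesis using zpair_inj a by blast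
qed

lemma vert_eq:
  assumes x: "x \<in> dB_vert (n+2)" and y: "y \<in> dB_vert (n+2)"
    and e0: "x!0 = y!0" and e1: "x!1 = y!1" and h: "hom_d x = hom_d y"
  shows "x = y"
proof -
  have lx: "length x = n+2" and ly: "length y = n+2" using x y by (auto simp: dB_vert_def)
  have sx: "set x \<subseteq> {0,1}" and sy: "set y \<subseteq> {0,1}" using x y by (auto simp: dB_vert_def)
  have step: "x!(k+2) = y!(k+2)" if k: "k < n" and a: "x!k = y!k" and c: "x!(k+1) = y!(k+1)" for k
  proof -
    have "hom_d x ! k = (x!k + x!(k+1) + x!(k+2)) mod 2" using k lx hom_d_nth[of k x] by simp
    moreover have "hom_d y ! k = (y!k + y!(k+1) + y!(k+2)) mod 2" using k ly hom_d_nth[of k y] by simp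
    ultimately have m: "(x!k + x!(k+1) + x!(k+2)) mod 2 = (x!k + x!(k+1) + y!(k+2)) mod 2"
      using h a c by simp
    have "k+2 < length x" using k lx by simp
    then have "x!(k+2) \<in> set x" by (rule nth_mem)
    then have xk: "x!(k+2) \<in> {0,1}" using sx by blast
    have "k+2 < length y" using k ly by simp
    then have "y!(k+2) \<in> set y" by (rule nth_mem)
    then have "y!(k+2) \<in> {0,1}" using sy by blast
    with xk show ?thesis using cancel2[OF m] by blast
  qed
  have all: "k < n + 1 \<longrightarrow> x!k = y!k \<and> x!(k+1) = y!(k+1)" for k
  proof (induction k)
    case 0 then show ?case using e0 e1 by simp
  next
    case (Suc k)
    show ?case
    proof
      assume "Suc k < n + 1"
      then have "k < n" by simp
      then have "x!k = y!k \<and> x!(k+1) = y!(k+1)" using Suc.IH by simp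
      then show "x!Suc k = y!Suc k \<and> x!(Suc k+1) = y!(Suc k+1)"
        using step[OF \<open>k < n\<close>] by simp
    qed
  qed
  show ?thesis
  proof (rule nth_equalityI)
    show "length x = length y" using lx ly by simp
    fix i assume "i < length x"
    then have "i < n + 2" using lx by simp
    then show "x!i = y!i"
    proof (cases "i < n + 1")
      case True then show ?thesis using all by blast
    next
      case False
      then have "i = n + 1" using \<open>i < n+2\<close> by simp
      then show ?thesis using all[of n] by simp
    qed
  qed
qed

lemma win_inj: "i < N \<Longrightarrow> j < N \<Longrightarrow> window n b i = window n b j \<Longrightarrow> i = j"
proof -
  assume a: "i < N" "j < N" "window n b i = window n b j"
  have "inj_on (window n b) {0..<N}" using db unfolding is_dB_cycle_def by simp
  then show "i = j" using a by (simp add: inj_on_eq_iff)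
qed

lemma pre_verts_char: "x \<in> pre_verts n b \<Longrightarrow> \<exists>t\<in>seeds. \<exists>k<N. x = V t k"
proof -
  assume x: "x \<in> pre_verts n b"
  then have xv: "x \<in> dB_vert (n+2)" and "hom_d x \<in> window n b ` {0..<N}" by (auto simp: pre_verts_def)
  then obtain k where k: "k < N" "hom_d x = window n b k" by auto
  have lx: "length x = n+2" and sx: "set x \<subseteq> {0,1}" using xv by (auto simp: dB_vert_def)
  have "x!0 \<in> set x" "x!1 \<in> set x" using lx by simp_all
  then have "x!0 \<in> {0,1}" "x!1 \<in> {0,1}" using sx by blast+
  then have "(x!0, x!1) \<in> seeds" unfolding seeds_def by blast
  moreover have "(\<lambda>s. zpair bp s k) ` seeds = seeds" using zpair_bij[of bp k] by (simp add: bij_betw_def)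
  ultimately obtain t where t: "t \<in> seeds" "zpair bp t k = (x!0, x!1)"
    by (metis (no_types, lifting) imageE)
  have "V t k = x"
  proof (rule vert_eq)
    show "V t k \<in> dB_vert (n + 2)" by (rule V_vert[OF t(1)])
    show "x \<in> dB_vert (n + 2)" by (rule xv)
    show "V t k ! 0 = x ! 0" using V01(1)[of t k] t(2) by simp
    show "V t k ! 1 = x ! 1" using V01(2)[of t k] t(2) by simp
    show "hom_d (V t k) = hom_d x" using hom_V k by simp
  qed
  then show ?thesis using t k by auto
qed

lemma succ_unique: "(x,y) \<in> pre_edges n b \<Longrightarrow> (x,y') \<in> pre_edges n b \<Longrightarrow> y = y'"
proof -
  assume a: "(x,y) \<in> pre_edges n b" "(x,y') \<in> pre_edges n b"
  then have yv: "y \<in> dB_vert (n+2)" "y' \<in> dB_vert (n+2)" and ed: "dB_edge x y" "dB_edge x y'"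
    and c: "(hom_d x, hom_d y) \<in> cyc_edges n b" "(hom_d x, hom_d y') \<in> cyc_edges n b"
    by (auto simp: pre_edges_def pre_verts_def)
  obtain k where k: "k < N" "hom_d x = window n b k" "hom_d y = window n b (Suc k)"
    using c(1) unfolding cyc_edges_def by auto
  obtain k' where k': "k' < N" "hom_d x = window n b k'" "hom_d y' = window n b (Suc k')"
    using c(2) unfolding cyc_edges_def by auto
  have "k = k'" using win_inj k k' by simp
  then have hh: "hom_d y = hom_d y'" using k k' by simp
  have bl: "butlast y = butlast y'" using ed unfolding dB_edge_def by simp
  have ly: "length y = n+2" "length y' = n+2" using yv by (auto simp: dB_vert_def)
  have i01: "0 < length (butlast y)" "1 < length (butlast y)" "0 < length (butlast y')" "1 < length (butlast y')" using ly n1 by simp_all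
  have "y!0 = butlast y ! 0" using nth_butlast[OF i01(1)] by simp
  also have "\<dots> = butlast y' ! 0" using bl by simp
  also have "\<dots> = y'!0" using nth_butlast[OF i01(3)] by simp
  finally have e0: "y!0 = y'!0" .
  have "y!1 = butlast y ! 1" using nth_butlast[OF i01(2)] by simp
  also have "\<dots> = butlast y' ! 1" using bl by simp
  also have "\<dots> = y'!1" using nth_butlast[OF i01(4)] by simp
  finally have e1: "y!1 = y'!1" .
  show ?thesis by (rule vert_eq[OF yv e0 e1 hh])
qed

lemma V_edge_pre: "s \<in> seeds \<Longrightarrow> (V s i, V s (Suc i)) \<in> pre_edges n b"
proof -
  assume s: "s \<in> seeds"
  have "(window n b (i mod N), window n b (Suc (i mod N))) \<in> cyc_edges n b"
    unfolding cyc_edges_def by auto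
  moreover have "window n b (Suc (i mod N)) = window n b (Suc i)"
  proof -
    have "window n b (Suc (i mod N)) = window n b (Suc (i mod N) mod N)" by (simp only: window_mod)
    also have "Suc (i mod N) mod N = Suc i mod N" by (simp add: mod_Suc_eq)
    also have "window n b (Suc i mod N) = window n b (Suc i)" by (simp only: window_mod)
    finally show ?thesis .
  qed
  moreover have "window n b (i mod N) = window n b i" by (simp only: window_mod)
  ultimately have "(hom_d (V s i), hom_d (V s (Suc i))) \<in> cyc_edges n b"
    by (simp only: hom_V)
  then show ?thesis unfolding pre_edges_def using V_pre[OF s] V_edge by auto
qed

end

context dbc begin

abbreviation "f \<equiv> fixed_seed n b"

lemma Dfix: "s \<in> seeds \<Longrightarrow> D s = s \<longleftrightarrow> s = f" by (rule Dmap_fix_iff)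

lemma D3: "s \<in> seeds \<Longrightarrow> D (D (D s)) = s" by (rule Dmap_3)

lemma funpow_seeds: "s \<in> seeds \<Longrightarrow> (D ^^ q) s \<in> seeds"
  by (induction q) (auto simp: Dmap_seeds)

lemma lt3: "(q::nat) < 3 \<longleftrightarrow> q = 0 \<or> q = 1 \<or> q = 2" by auto

lemma card_seeds: "card seeds = 4"
  unfolding seeds_def by (simp add: card_cartesian_product)

lemma orbit: "\<exists>s1\<in>seeds. (\<forall>s\<in>seeds. s = f \<or> (\<exists>q<3. s = (D^^q) s1))
   \<and> (\<forall>q<3. (D^^q) s1 \<noteq> f) \<and> (\<forall>q<3. \<forall>q'<3. (D^^q) s1 = (D^^q') s1 \<longrightarrow> q = q')
   \<and> (D^^3) s1 = s1"
proof -
  have fs: "f \<in> seeds" by (rule fixed_seed_in)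
  have c3: "card (seeds - {f}) = 3" using fs card_seeds by (simp add: card_Diff_singleton)
  have "seeds - {f} \<noteq> {}"
  proof
    assume "seeds - {f} = {}"
    then have "card (seeds - {f}) = 0" by (simp only: card.empty)
    then show False using c3 by (simp only: numeral_3_eq_3)
  qed
  then obtain s1 where s1: "s1 \<in> seeds" "s1 \<noteq> f" by auto
  define t1 where "t1 = D s1"
  define t2 where "t2 = D t1"
  have t: "t1 \<in> seeds" "t2 \<in> seeds" using s1 by (auto simp: t1_def t2_def Dmap_seeds)
  have Df: "D f = f" using Dfix fs by simp
  have t3: "D t2 = s1" using D3 s1 by (simp add: t1_def t2_def)
  have t1f: "t1 \<noteq> f"
  proof
    assume "t1 = f"
    then have "D (D t1) = f" using Df by simp
    then show False using t3 s1 by (simp add: t2_def)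
  qed
  have t2f: "t2 \<noteq> f"
  proof
    assume "t2 = f" then show False using t3 s1 Df by simp
  qed
  have d1: "s1 \<noteq> t1"
  proof
    assume "s1 = t1" then have "D s1 = s1" by (simp add: t1_def)
    then show False using Dfix[OF s1(1)] s1(2) by simp
  qed
  have d2: "t1 \<noteq> t2"
  proof
    assume "t1 = t2" then have "D t1 = t1" by (simp add: t2_def)
    then show False using Dfix[OF t(1)] t1f by simp
  qed
  have d3: "s1 \<noteq> t2"
  proof
    assume "s1 = t2" then have "D s1 = s1" using t3 by simp
    then show False using Dfix[OF s1(1)] s1(2) by simp
  qed
  have sub: "{s1, t1, t2} \<subseteq> seeds - {f}" using s1 t t1f t2f by auto
  have "card {s1, t1, t2} = 3" using d1 d2 d3 by auto
  then have eq: "{s1, t1, t2} = seeds - {f}"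
    using card_subset_eq[OF _ sub] c3 by (simp add: seeds_def)
  have p0: "(D^^0) s1 = s1" by simp
  have p1: "(D^^1) s1 = t1" by (simp add: t1_def)
  have p2: "(D^^2) s1 = t2" by (simp add: t1_def t2_def numeral_2_eq_2)
  have p3: "(D^^3) s1 = s1" using t3 by (simp add: t1_def t2_def numeral_3_eq_3)
  have r1: "\<forall>s\<in>seeds. s = f \<or> (\<exists>q<3. s = (D^^q) s1)"
  proof
    fix s assume "s \<in> seeds"
    then have "s = f \<or> s = s1 \<or> s = t1 \<or> s = t2" using eq by blast
    moreover have "(0::nat) < 3" "(1::nat) < 3" "(2::nat) < 3" by simp_all
    ultimately show "s = f \<or> (\<exists>q<3. s = (D^^q) s1)" using p0 p1 p2 by metis
  qed
  have r2: "\<forall>q<3. (D^^q) s1 \<noteq> f"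
  proof (intro allI impI)
    fix q :: nat assume "q < 3"
    then have "q = 0 \<or> q = 1 \<or> q = 2" by auto
    then show "(D^^q) s1 \<noteq> f" using p0 p1 p2 s1 t1f t2f by (elim disjE) simp_all
  qed
  have r3: "\<forall>q<3. \<forall>q'<3. (D^^q) s1 = (D^^q') s1 \<longrightarrow> q = q'"
  proof (intro allI impI)
    fix q q' :: nat assume "q < 3" "q' < 3" "(D^^q) s1 = (D^^q') s1"
    moreover have "q = 0 \<or> q = 1 \<or> q = 2" "q' = 0 \<or> q' = 1 \<or> q' = 2" using calculation(1,2) by auto
    ultimately show "q = q'" using p0 p1 p2 d1 d2 d3 by (elim disjE) simp_all
  qed
  show ?thesis using s1(1) r1 r2 r3 p3 by blast
qed

end

context dbc begin

lemma list_cyc: "L > 0 \<Longrightarrow> V s L = V s 0 \<Longrightarrow>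
   list_cyc_edges (map (V s) [0..<L]) = {(V s i, V s (Suc i)) | i. i < L}"
proof -
  assume L: "L > 0" and p: "V s L = V s 0"
  have e: "V s ((i + 1) mod L) = V s (Suc i)" if "i < L" for i
  proof (cases "Suc i = L")
    case True then show ?thesis using p by simp
  next
    case False then have "Suc i < L" using that by simp
    then show ?thesis by simp
  qed
  show ?thesis unfolding list_cyc_edges_def
  proof (intro set_eqI iffI)
    fix z assume "z \<in> {(map (V s) [0..<L] ! i, map (V s) [0..<L] ! ((i + 1) mod length (map (V s) [0..<L]))) | i. i < length (map (V s) [0..<L])}"
    then obtain i where i: "i < L" "z = (V s i, V s ((i + 1) mod L))" using L by auto
    then show "z \<in> {(V s i, V s (Suc i)) | i. i < L}" using e by auto
  next
    fix z assume "z \<in> {(V s i, V s (Suc i)) | i. i < L}"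
    then obtain i where i: "i < L" "z = (V s i, V s (Suc i))" by auto
    have "(i + 1) mod L < L" using L by simp
    then have "z = (map (V s) [0..<L] ! i, map (V s) [0..<L] ! ((i + 1) mod length (map (V s) [0..<L])))"
      using i e by simp
    moreover have "i < length (map (V s) [0..<L])" using i by simp
    ultimately show "z \<in> {(map (V s) [0..<L] ! i, map (V s) [0..<L] ! ((i + 1) mod length (map (V s) [0..<L]))) | i. i < length (map (V s) [0..<L])}"
      by blast
  qed
qed

lemma canon: "t \<in> seeds \<Longrightarrow> t' \<in> seeds \<Longrightarrow> r < N \<Longrightarrow> r' < N \<Longrightarrow> V t r = V t' r' \<Longrightarrow> r = r' \<and> t = t'"
proof -
  assume a: "t \<in> seeds" "t' \<in> seeds" "r < N" "r' < N" "V t r = V t' r'"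
  then have "window n b r = window n b r'" using hom_V by metis
  then have "r = r'" using win_inj a by blast
  then show ?thesis using V_inj_seed a by blast
qed

lemma main:
  shows "bij_betw (Dmap n b) seeds seeds
    \<and> {s \<in> seeds. Dmap n b s = s} = {fixed_seed n b}
    \<and> (\<exists>C1 C2. distinct C1 \<and> distinct C2
          \<and> length C1 = 2 ^ n \<and> length C2 = 3 * 2 ^ n
          \<and> set C1 \<inter> set C2 = {}
          \<and> hd C1 = start_vertex n b (fixed_seed n b)
          \<and> (\<forall>s \<in> seeds - {fixed_seed n b}. start_vertex n b s \<in> set C2)
          \<and> pre_verts n b = set C1 \<union> set C2
          \<and> pre_edges n b = list_cyc_edges C1 \<union> list_cyc_edges C2)"
proof -
  have bij: "bij_betw (Dmap n b) seeds seeds"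
    using zpair_bij[of b N] unfolding Dmap_def by simp
  have fs: "f \<in> seeds" by (rule fixed_seed_in)
  have Df: "D f = f" using Dfix[OF fs] by simp
  have fixset: "{s \<in> seeds. Dmap n b s = s} = {f}"
  proof (rule set_eqI)
    fix s show "s \<in> {s \<in> seeds. Dmap n b s = s} \<longleftrightarrow> s \<in> {f}" using Dfix[of s] fs Df by blast
  qed
  obtain s1 where s1: "s1 \<in> seeds" and cover: "\<forall>s\<in>seeds. s = f \<or> (\<exists>q<3. s = (D^^q) s1)"
    and nf: "\<forall>q<3. (D^^q) s1 \<noteq> f" and dq: "\<forall>q<3. \<forall>q'<3. (D^^q) s1 = (D^^q') s1 \<longrightarrow> q = q'"
    and p3: "(D^^3) s1 = s1"
    using orbit by blast
  define C1 where "C1 = map (V f) [0..<N]"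
  define C2 where "C2 = map (V s1) [0..<3*N]"
  have dec: "V s1 j = V ((D ^^ (j div N)) s1) (j mod N)" for j by (rule V_decomp)
  have jq: "j div N < 3" if "j < 3 * N" for j using that by (simp add: less_mult_imp_div_less)
  have jm: "j mod N < N" for j by simp
  have dseed: "(D^^q) s1 \<in> seeds" for q using funpow_seeds s1 by blast
  have dist1: "distinct C1"
    unfolding C1_def distinct_conv_nth
  proof (intro allI impI)
    fix i j assume "i < length (map (V f) [0..<N])" "j < length (map (V f) [0..<N])"
      "i \<noteq> j"
    moreover have "V f i \<noteq> V f j" if "i < N" "j < N" "i \<noteq> j" for i j
      using canon[OF fs fs that(1,2)] that(3) by blast
    ultimately show "map (V f) [0..<N] ! i \<noteq> map (V f) [0..<N] ! j" by simp
  qed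
  have dist2: "distinct C2"
    unfolding C2_def distinct_conv_nth
  proof (intro allI impI)
    fix i j assume "i < length (map (V s1) [0..<3*N])" "j < length (map (V s1) [0..<3*N])"
      "i \<noteq> j"
    then have ij: "i < 3*N" "j < 3*N" "i \<noteq> j" by auto
    have "V s1 i \<noteq> V s1 j"
    proof
      assume "V s1 i = V s1 j"
      then have "V ((D ^^ (i div N)) s1) (i mod N) = V ((D ^^ (j div N)) s1) (j mod N)" using dec by metis
      then have "i mod N = j mod N \<and> (D ^^ (i div N)) s1 = (D ^^ (j div N)) s1"
        using canon[OF dseed dseed jm jm] by blast
      then have "i mod N = j mod N" "i div N = j div N" using dq jq ij by blast+
      then show False using ij(3) by (metis div_mult_mod_eq)
    qed
    then show "map (V s1) [0..<3*N] ! i \<noteq> map (V s1) [0..<3*N] ! j" using ij by simp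
  qed
  have disj: "set C1 \<inter> set C2 = {}"
  proof (rule ccontr)
    assume "set C1 \<inter> set C2 \<noteq> {}"
    then obtain i j where ij: "i < N" "j < 3*N" "V f i = V s1 j" unfolding C1_def C2_def by auto
    then have "V f i = V ((D ^^ (j div N)) s1) (j mod N)" using dec by metis
    then have "f = (D ^^ (j div N)) s1" using canon[OF fs dseed ij(1) jm] by blast
    then show False using nf jq[OF ij(2)] by metis
  qed
  have hd1: "hd C1 = start_vertex n b f"
    unfolding C1_def using start_V by (simp add: hd_map upt_conv_Cons)
  have sv: "\<forall>s \<in> seeds - {f}. start_vertex n b s \<in> set C2"
  proof
    fix s assume s: "s \<in> seeds - {f}"
    then obtain q where q: "q < 3" "s = (D^^q) s1" using cover by blast
    have "start_vertex n b s = V s1 (q * N + 0)" using V_iter[of s1 q 0] q start_V by simp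
    moreover have "q * N + 0 < 3 * N" using q by simp
    ultimately show "start_vertex n b s \<in> set C2" unfolding C2_def by auto
  qed
  have inC: "V t k \<in> set C1 \<union> set C2" if t: "t \<in> seeds" "k < N" for t k
  proof -
    from cover t(1) have "t = f \<or> (\<exists>q<3. t = (D^^q) s1)" by blast
    then show ?thesis
    proof
      assume "t = f" then show ?thesis using t(2) unfolding C1_def by auto
    next
      assume "\<exists>q<3. t = (D^^q) s1"
      then obtain q where q: "q < 3" "t = (D^^q) s1" by blast
      have "V t k = V s1 (q * N + k)" using V_iter[of s1 q k] q by simp
      moreover have "q * N + k < 3 * N"
      proof -
        have "q \<le> 2" using q by simp
        then have "q * N \<le> 2 * N" by simp
        then show ?thesis using t(2) by linarith
      qed
      ultimately show ?thesis unfolding C2_def by auto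
    qed
  qed
  have pv: "pre_verts n b = set C1 \<union> set C2"
  proof
    show "pre_verts n b \<subseteq> set C1 \<union> set C2"
    proof
      fix x assume "x \<in> pre_verts n b"
      then obtain t k where "t \<in> seeds" "k < N" "x = V t k" using pre_verts_char by blast
      then show "x \<in> set C1 \<union> set C2" using inC by blast
    qed
    show "set C1 \<union> set C2 \<subseteq> pre_verts n b"
      unfolding C1_def C2_def using V_pre[OF fs] V_pre[OF s1] by auto
  qed
  have per1: "V f N = V f 0" using V_shift[of f 0] Dfix[OF fs] by simp
  have per2: "V s1 (3 * N) = V s1 0" using V_iter[of s1 3 0] p3 by simp
  have lc1: "list_cyc_edges C1 = {(V f i, V f (Suc i)) | i. i < N}"
    unfolding C1_def by (rule list_cyc) (simp_all add: per1)
  have lc2: "list_cyc_edges C2 = {(V s1 i, V s1 (Suc i)) | i. i < 3 * N}"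
    unfolding C2_def by (rule list_cyc) (simp_all add: per2)
  have pe: "pre_edges n b = list_cyc_edges C1 \<union> list_cyc_edges C2"
  proof
    show "list_cyc_edges C1 \<union> list_cyc_edges C2 \<subseteq> pre_edges n b"
      unfolding lc1 lc2 using V_edge_pre[OF fs] V_edge_pre[OF s1] by auto
    show "pre_edges n b \<subseteq> list_cyc_edges C1 \<union> list_cyc_edges C2"
    proof
      fix z assume z: "z \<in> pre_edges n b"
      obtain x y where xy: "z = (x,y)" by (cases z)
      have "x \<in> pre_verts n b" using z xy by (simp add: pre_edges_def)
      then have "x \<in> set C1 \<union> set C2" using pv by simp
      then show "z \<in> list_cyc_edges C1 \<union> list_cyc_edges C2"
      proof
        assume "x \<in> set C1"
        then obtain i where i: "i < N" "x = V f i" unfolding C1_def by auto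
        have "(x, V f (Suc i)) \<in> pre_edges n b" using V_edge_pre[OF fs] i by simp
        then have "y = V f (Suc i)" using succ_unique z xy by blast
        then show ?thesis using xy i unfolding lc1 by blast
      next
        assume "x \<in> set C2"
        then obtain i where i: "i < 3*N" "x = V s1 i" unfolding C2_def by auto
        have "(x, V s1 (Suc i)) \<in> pre_edges n b" using V_edge_pre[OF s1] i by simp
        then have "y = V s1 (Suc i)" using succ_unique z xy by blast
        then show ?thesis using xy i unfolding lc2 by blast
      qed
    qed
  qed
  have "length C1 = 2^n" "length C2 = 3 * 2^n" unfolding C1_def C2_def by simp_all
  then show ?thesis using bij fixset dist1 dist2 disj hd1 sv pv pe by blast
qed

end


theorem mainTheorem5:
  fixes n :: nat and b :: "nat \<Rightarrow> nat"
  assumes "n \<ge> 1" and "is_dB_cycle n b"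
  shows "bij_betw (Dmap n b) seeds seeds
    \<and> {s \<in> seeds. Dmap n b s = s} = {fixed_seed n b}
    \<and> (\<exists>C1 C2. distinct C1 \<and> distinct C2
          \<and> length C1 = 2 ^ n \<and> length C2 = 3 * 2 ^ n
          \<and> set C1 \<inter> set C2 = {}
          \<and> hd C1 = start_vertex n b (fixed_seed n b)
          \<and> (\<forall>s \<in> seeds - {fixed_seed n b}. start_vertex n b s \<in> set C2)
          \<and> pre_verts n b = set C1 \<union> set C2
          \<and> pre_edges n b = list_cyc_edges C1 \<union> list_cyc_edges C2)"
  using dbc.main[OF dbc.intro[OF assms]] .

end
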